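(* In the setting below, let $x\in\{0,1\}^n$ satisfy $w_{\mathcal{I}}(x)\in[W-w_{\max},W]$. With probability at least $1-1/n^2$ (over the random partition), for all $\ell\in\{0,\dots,\log_2 q\}$ and all $j\in\{1,\dots,q/2^\ell\}$: (i) $w_{\mathcal{I}^\ell_j}(x)\in J^\ell$, and (ii) $C^\ell_j[w_{\mathcal{I}^\ell_j}(x)]\ge p_{\mathcal{I}^\ell_j}(x)$.
   Context: Setting: a 0-1 Knapsack instance with items $\mathcal{I}=\{1,\dots,n\}$, $n\ge 3$, profits $p_i\in\mathbb{N}$, weights $w_i\in\mathbb{N}$, $w_{\max}=\max_i w_i$, budget $W$ with $w_{\max}\le W\le n\,w_{\max}$. For $\mathcal{J}\subseteq\mathcal{I}$ and $x\in\{0,1\}^n$, $w_{\mathcal{J}}(x)=\sum_{i\in\mathcal{J}}w_ix_i$, $p_{\mathcal{J}}(x)=\sum_{i\in\mathcal{J}}p_ix_i$, and the profit sequence is $\mathcal{P}_{\mathcal{J}}[t]=\max\{p_{\mathcal{J}}(x): x\in\{0,1\}^n,\ w_{\mathcal{J}}(x)\le t\}$ for $t\in\mathbb{N}$ (only items of $\mathcal{J}$ count). For reals $a\le b$, $[a..b]:=\{\max(0,\lfloor a\rfloor),\dots,\lceil b\rceil\}$. Let $q$ be a power of $2$ with $1\le q\le W/w_{\max}$, $\Delta:=w_{\max}W/q$, $\eta:=11\ln n$, and for $\ell\in\{0,\dots,\log_2q\}$ let $J^\ell:=[\tfrac{W}{q}2^\ell-\sqrt{\Delta2^\ell}\eta\,..\,\tfrac{W}{q}2^\ell+\sqrt{\Delta2^\ell}\eta]$.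 Assign each item independently uniformly at random to one of groups $\mathcal{I}^0_1,\dots,\mathcal{I}^0_q$, and set $\mathcal{I}^\ell_j=\mathcal{I}^{\ell-1}_{2j-1}\cup\mathcal{I}^{\ell-1}_{2j}$ for $\ell\ge1$, $1\le j\le q/2^\ell$. Define arrays $C^\ell_j$ indexed by $J^\ell$: $C^0_j[t]=\mathcal{P}_{\mathcal{I}^0_j}[t]$ for $t\in J^0$, and for $\ell\ge1$, $k\in J^\ell$: $C^\ell_j[k]=\max\{C^{\ell-1}_{2j-1}[i]+C^{\ell-1}_{2j}[i'] : i,i'\in J^{\ell-1},\ i+i'=k\}$ (maximum of the empty set is $-\infty$). *)

theory Defs
  imports "HOL-Probability.Probability"
begin

definition binvecs :: "nat \<Rightarrow> (nat \<Rightarrow> nat) set" where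
  "binvecs n = ({1..n} \<rightarrow>\<^sub>E {0::nat, 1})"

definition wsum :: "(nat \<Rightarrow> nat) \<Rightarrow> nat set \<Rightarrow> (nat \<Rightarrow> nat) \<Rightarrow> nat" where
  "wsum w J x = (\<Sum>i\<in>J. w i * x i)"

definition profit_seq :: "nat \<Rightarrow> (nat \<Rightarrow> nat) \<Rightarrow> (nat \<Rightarrow> nat) \<Rightarrow> nat set \<Rightarrow> nat \<Rightarrow> nat" where
  "profit_seq n p w J t = Max {wsum p J x | x. x \<in> binvecs n \<and> wsum w J x \<le> t}"

definition wmax :: "nat \<Rightarrow> (nat \<Rightarrow> nat) \<Rightarrow> nat" where
  "wmax n w = Max (w ` {1..n})"

definition nat_interval :: "real \<Rightarrow> real \<Rightarrow> nat set" where
  "nat_interval a b = {t. max 0 \<lfloor>a\<rfloor> \<le> int t \<and> int t \<le> \<lceil>b\<rceil>}"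

definition Jset :: "nat \<Rightarrow> (nat \<Rightarrow> nat) \<Rightarrow> nat \<Rightarrow> nat \<Rightarrow> nat \<Rightarrow> nat set" where
  "Jset n w W q l =
     (let \<Delta> = real (wmax n w) * real W / real q;
          \<eta> = 11 * ln (real n);
          c = real W / real q * 2 ^ l;
          r = sqrt (\<Delta> * 2 ^ l) * \<eta>
      in nat_interval (c - r) (c + r))"

fun grp :: "(nat \<Rightarrow> nat) \<Rightarrow> nat \<Rightarrow> nat \<Rightarrow> nat \<Rightarrow> nat set" where
  "grp \<sigma> n 0 j = {i \<in> {1..n}. \<sigma> i = j}"
| "grp \<sigma> n (Suc l) j = grp \<sigma> n l (2 * j - 1) \<union> grp \<sigma> n l (2 * j)"

text \<open>Arrays C^l_j (values in ereal; maximum of the empty set is -infinity).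
  Only the entries indexed by J^l are meaningful.\<close>
fun Carr :: "nat \<Rightarrow> (nat \<Rightarrow> nat) \<Rightarrow> (nat \<Rightarrow> nat) \<Rightarrow> nat \<Rightarrow> nat \<Rightarrow> (nat \<Rightarrow> nat)
              \<Rightarrow> nat \<Rightarrow> nat \<Rightarrow> nat \<Rightarrow> ereal" where
  "Carr n p w W q \<sigma> 0 j t = ereal (real (profit_seq n p w (grp \<sigma> n 0 j) t))"
| "Carr n p w W q \<sigma> (Suc l) j k =
     Sup {Carr n p w W q \<sigma> l (2 * j - 1) i + Carr n p w W q \<sigma> l (2 * j) i' | i i'.
            i \<in> Jset n w W q l \<and> i' \<in> Jset n w W q l \<and> i + i' = k}"

end

theory Submission imports Defs begin


lemma exp_quad:
  fixes v :: real assumes "\<bar>v\<bar> \<le> 1" shows "exp v \<le> 1 + v + v\<^sup>2"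
proof (cases "v \<ge> 0")
  case True thus ?thesis using exp_bound[of v] assms by auto
next
  case False
  define y where "y = - v"
  have y: "0 \<le> y" "y \<le> 1" using False assms by (auto simp: y_def)
  have e: "1 + y + y\<^sup>2 / 2 \<le> exp y" using exp_lower_Taylor_quadratic[OF y(1)] .
  have pos: "0 < 1 + y + y\<^sup>2 / 2" using y by (simp add: add_pos_nonneg)
  have "1 \<le> (1 - y + y\<^sup>2) * (1 + y + y\<^sup>2 / 2)"
  proof -
    have "(1 - y + y\<^sup>2) * (1 + y + y\<^sup>2 / 2) = 1 + y^2/2 + y^3/2 + y^4/2"
      by (simp add: field_simps power2_eq_square power3_eq_cube power4_eq_xxxx)
    thus ?thesis using y by (simp add: add_nonneg_nonneg)
  qed
  also have "\<dots> \<le> (1 - y + y\<^sup>2) * exp y"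
    by (rule mult_left_mono[OF e]) (use y zero_le_power2[of y] in linarith)
  finally have "1 \<le> (1 - y + y\<^sup>2) * exp y" .
  hence "exp (-y) \<le> 1 - y + y\<^sup>2"
    by (simp add: exp_minus field_simps)
  thus ?thesis by (simp add: y_def)
qed

lemma factor_bound:
  fixes a lam M p :: real
  assumes "0 \<le> a" "a \<le> M" "\<bar>lam\<bar> * M \<le> 1" "0 \<le> p" "p \<le> 1"
  shows "1 + p * (exp (lam * a) - 1) \<le> exp (p * (lam * a + lam\<^sup>2 * M * a))"
proof -
  have v: "\<bar>lam * a\<bar> \<le> 1"
  proof -
    have "\<bar>lam * a\<bar> = \<bar>lam\<bar> * a" using assms by (simp add: abs_mult)
    also have "\<dots> \<le> \<bar>lam\<bar> * M" using assms by (intro mult_left_mono) auto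
    finally show ?thesis using assms by linarith
  qed
  have "exp (lam * a) - 1 \<le> lam * a + (lam * a)\<^sup>2" using exp_quad[OF v] by linarith
  also have "(lam * a)\<^sup>2 = lam\<^sup>2 * a * a" by (simp add: power2_eq_square)
  also have "lam\<^sup>2 * a * a \<le> lam\<^sup>2 * M * a"
    using assms by (intro mult_right_mono mult_left_mono) auto
  finally have "p * (exp (lam * a) - 1) \<le> p * (lam * a + lam\<^sup>2 * M * a)"
    using assms by (intro mult_left_mono) auto
  hence "1 + p * (exp (lam * a) - 1) \<le> 1 + p * (lam * a + lam\<^sup>2 * M * a)" by linarith
  also have "\<dots> \<le> exp (p * (lam * a + lam\<^sup>2 * M * a))" by (rule exp_ge_add_one_self)
  finally show ?thesis .
qed

lemma mgf_bound:
  fixes a :: "nat \<Rightarrow> real" and L :: "nat set" and lam M :: real and q n :: nat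
  assumes q: "q \<ge> 1" and L: "L \<subseteq> {1..q}"
    and a: "\<And>i. i \<in> {1..n} \<Longrightarrow> 0 \<le> a i \<and> a i \<le> M" and lam: "\<bar>lam\<bar> * M \<le> 1"
  shows "(\<Sum>\<sigma>\<in>PiE {1..n} (\<lambda>_. {1..q}). exp (lam * (\<Sum>i\<in>{1..n}. if \<sigma> i \<in> L then a i else 0)))
     \<le> real q ^ n * exp (real (card L) / real q * (lam * (\<Sum>i\<in>{1..n}. a i) + lam\<^sup>2 * M * (\<Sum>i\<in>{1..n}. a i)))"
proof -
  define p where "p = real (card L) / real q"
  have finL: "finite L" using L finite_subset by blast
  have p0: "0 \<le> p" and p1: "p \<le> 1"
    using card_mono[OF _ L] q by (auto simp: p_def)
  define f where "f i b = exp (lam * (if b \<in> L then a i else 0))" for i b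
  have "(\<Sum>\<sigma>\<in>PiE {1..n} (\<lambda>_. {1..q}). exp (lam * (\<Sum>i\<in>{1..n}. if \<sigma> i \<in> L then a i else 0)))
      = (\<Sum>\<sigma>\<in>PiE {1..n} (\<lambda>_. {1..q}). \<Prod>i\<in>{1..n}. f i (\<sigma> i))"
    by (simp add: f_def sum_distrib_left exp_sum)
  also have "\<dots> = (\<Prod>i\<in>{1..n}. \<Sum>b\<in>{1..q}. f i b)"
    by (rule prod_sum_PiE[symmetric]) auto
  also have "\<dots> \<le> (\<Prod>i\<in>{1..n}. real q * exp (p * (lam * a i + lam\<^sup>2 * M * a i)))"
  proof (rule prod_mono)
    fix i assume i: "i \<in> {1..n}"
    have split: "{1..q} = L \<union> ({1..q} - L)" using L by auto
    have "(\<Sum>b\<in>{1..q}. f i b) = (\<Sum>b\<in>L. f i b) + (\<Sum>b\<in>{1..q} - L. f i b)"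
      by (subst split, rule sum.union_disjoint) (use finL in auto)
    also have "(\<Sum>b\<in>L. f i b) = real (card L) * exp (lam * a i)"
      by (simp add: f_def)
    also have "(\<Sum>b\<in>{1..q} - L. f i b) = real (card ({1..q} - L))"
      by (simp add: f_def)
    also have "real (card ({1..q} - L)) = real q - real (card L)"
      using card_Diff_subset[OF finL L] card_mono[OF _ L] by auto
    finally have eq: "(\<Sum>b\<in>{1..q}. f i b) = real (card L) * exp (lam * a i) + (real q - real (card L))" .
    have eq2: "real q * (1 + p * (exp (lam * a i) - 1)) = real (card L) * exp (lam * a i) + (real q - real (card L))"
      using q by (simp add: p_def field_simps)
    have "(\<Sum>b\<in>{1..q}. f i b) = real q * (1 + p * (exp (lam * a i) - 1))"
      using eq eq2 by simp
    also have "\<dots> \<le> real q * exp (p * (lam * a i + lam\<^sup>2 * M * a i))"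
      using factor_bound[of "a i" M lam p] a[OF i] lam p0 p1 by (intro mult_left_mono) auto
    finally show "0 \<le> (\<Sum>b\<in>{1..q}. f i b) \<and> (\<Sum>b\<in>{1..q}. f i b) \<le> real q * exp (p * (lam * a i + lam\<^sup>2 * M * a i))"
      by (auto simp: f_def intro: sum_nonneg)
  qed
  also have "\<dots> = real q ^ n * exp (\<Sum>i\<in>{1..n}. p * (lam * a i + lam\<^sup>2 * M * a i))"
    by (simp add: prod.distrib exp_sum)
  also have "(\<Sum>i\<in>{1..n}. p * (lam * a i + lam\<^sup>2 * M * a i)) = p * (lam * (\<Sum>i\<in>{1..n}. a i) + lam\<^sup>2 * M * (\<Sum>i\<in>{1..n}. a i))"
    by (simp add: sum_distrib_left sum.distrib algebra_simps)
  finally show ?thesis by (simp add: p_def)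
qed

lemma markov_card:
  fixes S :: "'a set" and Y :: "'a \<Rightarrow> real"
  assumes "finite S"
  shows "real (card {\<sigma>\<in>S. t \<le> lam * Y \<sigma>}) \<le> exp (- t) * (\<Sum>\<sigma>\<in>S. exp (lam * Y \<sigma>))"
proof -
  have "real (card {\<sigma>\<in>S. t \<le> lam * Y \<sigma>}) = (\<Sum>\<sigma>\<in>{\<sigma>\<in>S. t \<le> lam * Y \<sigma>}. 1)" by simp
  also have "\<dots> \<le> (\<Sum>\<sigma>\<in>{\<sigma>\<in>S. t \<le> lam * Y \<sigma>}. exp (lam * Y \<sigma> - t))"
    by (intro sum_mono) auto
  also have "\<dots> \<le> (\<Sum>\<sigma>\<in>S. exp (lam * Y \<sigma> - t))"
    by (intro sum_mono2) (use assms in auto)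
  also have "\<dots> = exp (- t) * (\<Sum>\<sigma>\<in>S. exp (lam * Y \<sigma>))"
    by (simp add: sum_distrib_left exp_diff exp_minus field_simps)
  finally show ?thesis .
qed

lemma tail_bounds:
  fixes a :: "nat \<Rightarrow> real" and L :: "nat set" and M c r eta :: real and q n :: nat
  assumes q: "q \<ge> 1" and L: "L \<subseteq> {1..q}"
    and a: "\<And>i. i \<in> {1..n} \<Longrightarrow> 0 \<le> a i \<and> a i \<le> M" and M: "0 < M"
    and mu1: "real (card L) / real q * (\<Sum>i\<in>{1..n}. a i) \<le> c"
    and mu2: "c - real (card L) / real q * (\<Sum>i\<in>{1..n}. a i) \<le> M"
    and Mc: "M \<le> c" and r: "r = sqrt (M * c) * eta"
  defines "Y \<equiv> \<lambda>\<sigma>. (\<Sum>i\<in>{1..n}. if \<sigma> i \<in> L then a i else 0)"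
  shows "real (card {\<sigma>\<in>PiE {1..n} (\<lambda>_. {1..q}). c + r \<le> Y \<sigma>}) \<le> exp (1 - eta) * real q ^ n"
    and "real (card {\<sigma>\<in>PiE {1..n} (\<lambda>_. {1..q}). Y \<sigma> \<le> c - r}) \<le> exp (2 - eta) * real q ^ n"
proof -
  define S where "S = PiE {1..n} (\<lambda>_::nat. {1..q::nat})"
  have finS: "finite S" unfolding S_def by (intro finite_PiE) auto
  define A where "A = (\<Sum>i\<in>{1..n}. a i)"
  define p where "p = real (card L) / real q"
  define \<mu> where "\<mu> = p * A"
  have A0: "0 \<le> A" unfolding A_def using a by (intro sum_nonneg) auto
  have p0: "0 \<le> p" unfolding p_def by simp
  have mu0: "0 \<le> \<mu>" using A0 p0 by (simp add: \<mu>_def)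
  have mu1': "\<mu> \<le> c" and mu2': "c - \<mu> \<le> M" using mu1 mu2 by (auto simp: \<mu>_def p_def A_def)
  define s where "s = sqrt (M * c)"
  have c0: "0 < c" using M Mc by linarith
  have s0: "0 < s" using M c0 by (simp add: s_def)
  have s2: "s * s = M * c" using M c0 by (simp add: s_def)
  have Ms: "M \<le> s"
  proof -
    have "M * M \<le> s * s" using s2 M Mc by (simp add: mult_left_mono)
    thus ?thesis using s0 M by (meson mult_mono' not_le less_imp_le mult_strict_mono)
  qed
  have rs: "r = s * eta" using r s_def by simp
  have mgf: "\<And>lam. \<bar>lam\<bar> * M \<le> 1 \<Longrightarrow> (\<Sum>\<sigma>\<in>S. exp (lam * Y \<sigma>)) \<le> real q ^ n * exp (lam * \<mu> + lam\<^sup>2 * M * \<mu>)"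
  proof -
    fix lam :: real assume "\<bar>lam\<bar> * M \<le> 1"
    from mgf_bound[OF q L a this]
    show "(\<Sum>\<sigma>\<in>S. exp (lam * Y \<sigma>)) \<le> real q ^ n * exp (lam * \<mu> + lam\<^sup>2 * M * \<mu>)"
      by (simp add: S_def Y_def \<mu>_def p_def A_def algebra_simps)
  qed
  have lamM: "\<bar>1 / s\<bar> * M \<le> 1" "\<bar>- 1 / s\<bar> * M \<le> 1" using Ms s0 by auto
  have lam2: "(1/s)\<^sup>2 * M * \<mu> \<le> 1" "(-1/s)\<^sup>2 * M * \<mu> \<le> 1"
  proof -
    have "(1/s)\<^sup>2 * M * \<mu> \<le> (1/s)\<^sup>2 * M * c"
      using mu1' M by (intro mult_left_mono) auto
    also have "\<dots> = 1" using s2 s0 M c0 by (simp add: power2_eq_square field_simps)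
    finally show "(1/s)\<^sup>2 * M * \<mu> \<le> 1" "(-1/s)\<^sup>2 * M * \<mu> \<le> 1" by simp_all
  qed
  have "{\<sigma>\<in>S. c + r \<le> Y \<sigma>} \<subseteq> {\<sigma>\<in>S. (1/s) * (c + r) \<le> (1/s) * Y \<sigma>}"
    using s0 by (auto simp: divide_right_mono)
  hence "real (card {\<sigma>\<in>S. c + r \<le> Y \<sigma>}) \<le> real (card {\<sigma>\<in>S. (1/s) * (c + r) \<le> (1/s) * Y \<sigma>})"
    using finS by (intro of_nat_mono card_mono) auto
  also have "\<dots> \<le> exp (- ((1/s) * (c + r))) * (\<Sum>\<sigma>\<in>S. exp ((1/s) * Y \<sigma>))"
    by (rule markov_card[OF finS])
  also have "\<dots> \<le> exp (- ((1/s) * (c + r))) * (real q ^ n * exp ((1/s) * \<mu> + (1/s)\<^sup>2 * M * \<mu>))"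
    by (intro mult_left_mono mgf lamM) auto
  also have "\<dots> = exp ((1/s) * \<mu> + (1/s)\<^sup>2 * M * \<mu> - (1/s) * (c + r)) * real q ^ n"
    by (simp add: exp_diff exp_minus field_simps)
  also have "\<dots> \<le> exp (1 - eta) * real q ^ n"
  proof -
    have "(1/s) * \<mu> \<le> (1/s) * c" using mu1' s0 by (intro mult_left_mono) auto
    moreover have "(1/s) * r = eta" using rs s0 by simp
    moreover have "(1/s) * (c + r) = (1/s) * c + (1/s) * r" by (rule distrib_left)
    ultimately have "(1/s) * \<mu> + (1/s)\<^sup>2 * M * \<mu> - (1/s) * (c + r) \<le> 1 - eta"
      using lam2(1) by linarith
    thus ?thesis by (intro mult_right_mono) auto
  qed
  finally show "real (card {\<sigma>\<in>PiE {1..n} (\<lambda>_. {1..q}). c + r \<le> Y \<sigma>}) \<le> exp (1 - eta) * real q ^ n"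
    by (simp add: S_def)
  have "{\<sigma>\<in>S. Y \<sigma> \<le> c - r} \<subseteq> {\<sigma>\<in>S. (-1/s) * (c - r) \<le> (-1/s) * Y \<sigma>}"
  proof safe
    fix \<sigma> assume "Y \<sigma> \<le> c - r"
    hence "(1/s) * Y \<sigma> \<le> (1/s) * (c - r)" using s0 by (intro mult_left_mono) auto
    thus "(-1/s) * (c - r) \<le> (-1/s) * Y \<sigma>" by simp
  qed
  hence "real (card {\<sigma>\<in>S. Y \<sigma> \<le> c - r}) \<le> real (card {\<sigma>\<in>S. (-1/s) * (c - r) \<le> (-1/s) * Y \<sigma>})"
    using finS by (intro of_nat_mono card_mono) auto
  also have "\<dots> \<le> exp (- ((-1/s) * (c - r))) * (\<Sum>\<sigma>\<in>S. exp ((-1/s) * Y \<sigma>))"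
    by (rule markov_card[OF finS])
  also have "\<dots> \<le> exp (- ((-1/s) * (c - r))) * (real q ^ n * exp ((-1/s) * \<mu> + (-1/s)\<^sup>2 * M * \<mu>))"
    by (intro mult_left_mono mgf lamM) auto
  also have "\<dots> = exp ((-1/s) * \<mu> + (-1/s)\<^sup>2 * M * \<mu> - (-1/s) * (c - r)) * real q ^ n"
    by (simp add: exp_diff exp_minus field_simps mult_exp_exp)
  also have "\<dots> \<le> exp (2 - eta) * real q ^ n"
  proof -
    have "(1/s) * (c - \<mu>) \<le> (1/s) * s" using mu2' Ms s0 by (intro mult_left_mono) auto
    hence "(1/s) * (c - \<mu>) \<le> 1" using s0 by simp
    moreover have "(1/s) * r = eta" using rs s0 by simp
    moreover have "(-1/s) * \<mu> - (-1/s) * (c - r) = (1/s) * (c - \<mu>) - (1/s) * r" by (simp add: diff_divide_distrib right_diff_distrib)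
    ultimately have "(-1/s) * \<mu> + (-1/s)\<^sup>2 * M * \<mu> - (-1/s) * (c - r) \<le> 2 - eta"
      using lam2(2) by linarith
    thus ?thesis by (intro mult_right_mono) auto
  qed
  finally show "real (card {\<sigma>\<in>PiE {1..n} (\<lambda>_. {1..q}). Y \<sigma> \<le> c - r}) \<le> exp (2 - eta) * real q ^ n"
    by (simp add: S_def)
qed



lemma grp_char:
  assumes "j \<ge> 1"
  shows "grp \<sigma> n l j = {i\<in>{1..n}. \<sigma> i \<in> {(j-1)*2^l<..j*2^l}}"
  using assms
proof (induction l arbitrary: j)
  case 0
  thus ?case by auto
next
  case (Suc l)
  obtain j' where j': "j = Suc j'" using Suc.prems by (cases j) auto
  have "grp \<sigma> n (Suc l) j = grp \<sigma> n l (2*j-1) \<union> grp \<sigma> n l (2*j)" by simp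
  also have "\<dots> = {i\<in>{1..n}. \<sigma> i \<in> {(2*j-1-1)*2^l<..(2*j-1)*2^l}} \<union> {i\<in>{1..n}. \<sigma> i \<in> {(2*j-1)*2^l<..(2*j)*2^l}}"
    using Suc.IH[of "2*j-1"] Suc.IH[of "2*j"] Suc.prems by auto
  also have "\<dots> = {i\<in>{1..n}. \<sigma> i \<in> {(j-1)*2^Suc l<..j*2^Suc l}}"
    by (auto simp: j' algebra_simps)
  finally show ?case .
qed

lemma grp_disj:
  assumes "j \<ge> 1" shows "grp \<sigma> n l (2*j-1) \<inter> grp \<sigma> n l (2*j) = {}"
proof -
  have "grp \<sigma> n l (2*j-1) = {i\<in>{1..n}. \<sigma> i \<in> {(2*j-1-1)*2^l<..(2*j-1)*2^l}}"
    using grp_char[of "2*j-1"] assms by auto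
  moreover have "grp \<sigma> n l (2*j) = {i\<in>{1..n}. \<sigma> i \<in> {(2*j-1)*2^l<..(2*j)*2^l}}"
    using grp_char[of "2*j"] assms by auto
  ultimately show ?thesis by auto
qed

lemma grp_finite: "finite (grp \<sigma> n l j)"
  by (induction l arbitrary: j) auto

lemma nat_interval_out:
  assumes "t \<notin> nat_interval a b" shows "real t \<le> a \<or> b \<le> real t"
proof -
  have "\<not> (max 0 \<lfloor>a\<rfloor> \<le> int t \<and> int t \<le> \<lceil>b\<rceil>)" using assms by (simp add: nat_interval_def)
  hence "int t < \<lfloor>a\<rfloor> \<or> \<lceil>b\<rceil> < int t" by auto
  thus ?thesis
  proof
    assume "int t < \<lfloor>a\<rfloor>"
    hence "real_of_int (int t) < a" by linarith
    thus ?thesis by simp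
  next
    assume "\<lceil>b\<rceil> < int t"
    hence "b < real_of_int (int t)" by linarith
    thus ?thesis by simp
  qed
qed

lemma carr_ge:
  fixes n W q l :: nat and p w x :: "nat \<Rightarrow> nat"
  assumes x: "x \<in> binvecs n"
    and H: "\<forall>l'<l. \<forall>j'\<in>{1..q div 2^l'}. wsum w (grp \<sigma> n l' j') x \<in> Jset n w W q l'"
    and j: "j \<in> {1..q div 2^l}"
  shows "Carr n p w W q \<sigma> l j (wsum w (grp \<sigma> n l j) x) \<ge> ereal (real (wsum p (grp \<sigma> n l j) x))"
  using H j
proof (induction l arbitrary: j)
  case 0
  let ?J = "grp \<sigma> n 0 j"
  have fin: "finite {y. y \<in> binvecs n \<and> wsum w ?J y \<le> wsum w ?J x}"
    by (rule finite_subset[of _ "binvecs n"]) (auto simp: binvecs_def intro: finite_PiE)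
  have "wsum p ?J x \<le> profit_seq n p w ?J (wsum w ?J x)"
    unfolding profit_seq_def
    by (rule Max_ge) (use fin x in \<open>auto intro: finite_image_set\<close>)
  thus ?case by simp
next
  case (Suc l)
  have j1: "j \<ge> 1" using Suc.prems by auto
  have "2 * j \<le> q div 2^l"
  proof -
    have e: "q div 2^Suc l = q div 2^l div 2" by (simp only: power_Suc2 div_mult2_eq)
    have "j \<le> q div 2^l div 2" using Suc.prems(2) unfolding e by simp
    thus ?thesis by linarith
  qed
  hence jj: "2*j-1 \<in> {1..q div 2^l}" "2*j \<in> {1..q div 2^l}" using j1 by auto
  have H': "\<forall>l'<l. \<forall>j'\<in>{1..q div 2^l'}. wsum w (grp \<sigma> n l' j') x \<in> Jset n w W q l'"
    using Suc.prems by auto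
  define i1 where "i1 = wsum w (grp \<sigma> n l (2*j-1)) x"
  define i2 where "i2 = wsum w (grp \<sigma> n l (2*j)) x"
  have inJ: "i1 \<in> Jset n w W q l" "i2 \<in> Jset n w W q l"
    using Suc.prems(1) jj by (auto simp: i1_def i2_def)
  have un: "\<And>f. wsum f (grp \<sigma> n (Suc l) j) x = wsum f (grp \<sigma> n l (2*j-1)) x + wsum f (grp \<sigma> n l (2*j)) x"
  proof -
    fix f :: "nat \<Rightarrow> nat"
    have d: "grp \<sigma> n l (2*j-1) \<inter> grp \<sigma> n l (2*j) = {}" by (rule grp_disj[OF j1])
    have "wsum f (grp \<sigma> n (Suc l) j) x = wsum f (grp \<sigma> n l (2*j-1) \<union> grp \<sigma> n l (2*j)) x"
      by (simp only: grp.simps)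
    also have "\<dots> = wsum f (grp \<sigma> n l (2*j-1)) x + wsum f (grp \<sigma> n l (2*j)) x"
      unfolding wsum_def by (rule sum.union_disjoint[OF grp_finite grp_finite d])
    finally show "wsum f (grp \<sigma> n (Suc l) j) x = wsum f (grp \<sigma> n l (2*j-1)) x + wsum f (grp \<sigma> n l (2*j)) x" .
  qed
  have "ereal (real (wsum p (grp \<sigma> n (Suc l) j) x))
        = ereal (real (wsum p (grp \<sigma> n l (2*j-1)) x)) + ereal (real (wsum p (grp \<sigma> n l (2*j)) x))"
    by (simp only: un of_nat_add plus_ereal.simps(1))
  also have "\<dots> \<le> Carr n p w W q \<sigma> l (2*j-1) i1 + Carr n p w W q \<sigma> l (2*j) i2"
    using Suc.IH[OF H' jj(1)] Suc.IH[OF H' jj(2)] unfolding i1_def i2_def by (rule add_mono)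
  also have "\<dots> \<le> Carr n p w W q \<sigma> (Suc l) j (wsum w (grp \<sigma> n (Suc l) j) x)"
  proof -
    have e: "wsum w (grp \<sigma> n (Suc l) j) x = i1 + i2" unfolding i1_def i2_def by (rule un)
    show ?thesis unfolding e Carr.simps
      by (rule Sup_upper) (use inJ in blast)
  qed
  finally show ?case .
qed



lemma final_arith:
  fixes n :: nat and K :: real
  assumes n: "n \<ge> 3" and K: "0 \<le> K" "K \<le> real n * real n"
  shows "K * (2 * exp (2 - 11 * ln (real n))) \<le> 1 / real n ^ 2"
proof -
  have n0: "0 < real n" using n by simp
  have e11: "exp (11 * ln (real n)) = real n ^ 11"
  proof -
    have "11 * ln (real n) = ln (real n ^ 11)" using n0 by (simp add: ln_realpow)
    thus ?thesis using n0 by simp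
  qed
  have e2: "exp (2::real) \<le> 9"
  proof -
    have "exp (2::real) = exp 1 * exp 1" by (simp add: mult_exp_exp)
    also have "\<dots> \<le> 3 * 3" using exp_le by (intro mult_mono) auto
    finally show ?thesis by simp
  qed
  have n7: "(18::real) \<le> real n ^ 7"
  proof -
    have "(3::real)^7 \<le> real n ^ 7" using n by (intro power_mono) auto
    thus ?thesis by simp
  qed
  have "K * (2 * exp (2 - 11 * ln (real n))) = K * 2 * exp 2 / real n ^ 11"
    by (simp add: exp_diff e11)
  also have "\<dots> \<le> real n * real n * 2 * 9 / real n ^ 11"
    using K e2 n0 by (intro divide_right_mono mult_mono) auto
  also have "\<dots> = 18 / real n ^ 9"
    using n0 by (simp add: field_simps power2_eq_square eval_nat_numeral)
  also have "\<dots> \<le> real n ^ 7 / real n ^ 9"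
    using n7 n0 by (intro divide_right_mono) auto
  also have "\<dots> = 1 / real n ^ 2"
    using n0 by (simp add: field_simps eval_nat_numeral)
  finally show ?thesis .
qed



lemma group_bound:
  fixes n W q k l j :: nat and w x :: "nat \<Rightarrow> nat"
  assumes WM: "wmax n w \<le> W" and WnM: "W \<le> n * wmax n w"
    and qk: "q = 2 ^ k" and qM: "q * wmax n w \<le> W"
    and x: "x \<in> binvecs n"
    and A1: "W - wmax n w \<le> wsum w {1..n} x" and A2: "wsum w {1..n} x \<le> W"
    and l: "l \<le> k" and j: "j \<in> {1..q div 2^l}"
  shows "real (card {\<sigma>\<in>PiE {1..n} (\<lambda>_. {1..q}). wsum w (grp \<sigma> n l j) x \<notin> Jset n w W q l})
         \<le> (if wmax n w = 0 then 0 else 2 * exp (2 - 11 * ln (real n)) * real q ^ n)"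
proof -
  define M where "M = wmax n w"
  define S where "S = PiE {1..n} (\<lambda>_::nat. {1..q})"
  define eta where "eta = 11 * ln (real n)"
  have q1: "q \<ge> 1" using qk by simp
  have wle: "\<And>i. i \<in> {1..n} \<Longrightarrow> w i \<le> M" unfolding M_def wmax_def by (rule Max_ge) auto
  have x01: "\<And>i. i \<in> {1..n} \<Longrightarrow> x i \<le> 1" using x unfolding binvecs_def PiE_iff by fastforce
  have j1: "j \<ge> 1" using j by auto
  define L where "L = {(j-1)*2^l<..j*2^l}"
  have grpL: "\<And>\<sigma>. grp \<sigma> n l j = {i\<in>{1..n}. \<sigma> i \<in> L}" unfolding L_def by (rule grp_char[OF j1])
  have B: "0 \<le> 2 * exp (2 - eta) * real q ^ n" by simp
  show ?thesis
  proof (cases "M = 0")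
    case True
    have W0: "W = 0" using WnM True by (simp add: M_def)
    have "\<And>\<sigma>. wsum w (grp \<sigma> n l j) x = 0"
      unfolding wsum_def grpL using wle True by (intro sum.neutral) fastforce
    moreover have "0 \<in> Jset n w W q l"
      by (simp add: Jset_def nat_interval_def W0 True[unfolded M_def])
    ultimately have e: "{\<sigma>\<in>PiE {1..n} (\<lambda>_. {1..q}). wsum w (grp \<sigma> n l j) x \<notin> Jset n w W q l} = {}"
      by auto
    show ?thesis unfolding e by simp
  next
    case False
    hence M0: "0 < real M" by simp
    define a where "a i = real (w i * x i)" for i
    have a: "\<And>i. i \<in> {1..n} \<Longrightarrow> 0 \<le> a i \<and> a i \<le> real M"
    proof -
      fix i assume i: "i \<in> {1..n}"
      have "w i * x i \<le> M * 1" using wle[OF i] x01[OF i] by (intro mult_le_mono) auto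
      thus "0 \<le> a i \<and> a i \<le> real M" unfolding a_def by (metis of_nat_0_le_iff of_nat_le_iff mult_1_right)
    qed
    have lq: "2^l \<le> q" using l qk by (simp add: power_increasing)
    have jq: "j * 2^l \<le> q"
    proof -
      have "j * 2^l \<le> q div 2^l * 2^l" using j by (intro mult_right_mono) auto
      also have "\<dots> \<le> q" by (rule div_times_less_eq_dividend)
      finally show ?thesis .
    qed
    have LS: "L \<subseteq> {1..q}" unfolding L_def using jq by auto
    have cardL: "card L = 2^l"
    proof -
      have "card L = j * 2^l - (j-1) * 2^l" by (simp add: L_def)
      also have "\<dots> = 2^l" using j1 by (simp add: diff_mult_distrib)
      finally show ?thesis .
    qed
    define c where "c = real W / real q * 2^l"
    define r where "r = sqrt (real M * real W / real q * 2 ^ l) * eta"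
    have JS: "Jset n w W q l = nat_interval (c - r) (c + r)"
      by (simp add: Jset_def Let_def c_def r_def eta_def M_def)
    have rr: "r = sqrt (real M * c) * eta" by (simp add: r_def c_def)
    define A where "A = (\<Sum>i\<in>{1..n}. a i)"
    have AW: "A = real (wsum w {1..n} x)" by (simp add: A_def a_def wsum_def)
    have Y: "\<And>\<sigma>. real (wsum w (grp \<sigma> n l j) x) = (\<Sum>i\<in>{1..n}. if \<sigma> i \<in> L then a i else 0)"
    proof -
      fix \<sigma> :: "nat \<Rightarrow> nat"
      have "real (wsum w (grp \<sigma> n l j) x) = (\<Sum>i\<in>{i\<in>{1..n}. \<sigma> i \<in> L}. a i)"
        unfolding grpL wsum_def a_def by (rule of_nat_sum)
      also have "\<dots> = (\<Sum>i\<in>{1..n}. if \<sigma> i \<in> L then a i else 0)"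
        by (rule sum.inter_filter) simp
      finally show "real (wsum w (grp \<sigma> n l j) x) = (\<Sum>i\<in>{1..n}. if \<sigma> i \<in> L then a i else 0)" .
    qed
    have q0: "0 < real q" using q1 by simp
    have p1: "real (2^l) / real q \<le> 1" using lq q0 by simp
    have mu1: "real (card L) / real q * A \<le> c"
      unfolding c_def cardL AW using A2 q0 by (simp add: field_simps)
    have mu2: "c - real (card L) / real q * A \<le> real M"
    proof -
      have "real W - real M \<le> A" using A1 WM unfolding AW M_def by linarith
      hence "c - real (card L) / real q * A = real (2^l) / real q * (real W - A)"
        using q0 by (simp add: c_def cardL diff_divide_distrib right_diff_distrib)
      also have "\<dots> \<le> real (2^l) / real q * real M"
        using \<open>real W - real M \<le> A\<close> q0 by (intro mult_left_mono) auto
      also have "\<dots> \<le> 1 * real M" using p1 M0 by (intro mult_right_mono) auto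
      finally show ?thesis by simp
    qed
    have Mc: "real M \<le> c"
    proof -
      have "real q * real M \<le> real W" using qM unfolding M_def by (simp flip: of_nat_mult)
      hence "real M \<le> real W / real q" using q0 by (simp add: field_simps)
      also have "\<dots> \<le> real W / real q * 2^l"
        using mult_left_mono[OF one_le_power[of "2::real" l], of "real W / real q"] q0 by simp
      finally show ?thesis by (simp add: c_def)
    qed
    have finS: "finite S" unfolding S_def by (intro finite_PiE) auto
    note tb = tail_bounds[OF q1 LS a M0 mu1[unfolded A_def] mu2[unfolded A_def] Mc rr]
    have sub: "{\<sigma>\<in>S. wsum w (grp \<sigma> n l j) x \<notin> Jset n w W q l}
       \<subseteq> {\<sigma>\<in>S. c + r \<le> (\<Sum>i\<in>{1..n}. if \<sigma> i \<in> L then a i else 0)}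
         \<union> {\<sigma>\<in>S. (\<Sum>i\<in>{1..n}. if \<sigma> i \<in> L then a i else 0) \<le> c - r}"
      using nat_interval_out unfolding JS Y[symmetric] by blast
    have "card {\<sigma>\<in>S. wsum w (grp \<sigma> n l j) x \<notin> Jset n w W q l}
       \<le> card ({\<sigma>\<in>S. c + r \<le> (\<Sum>i\<in>{1..n}. if \<sigma> i \<in> L then a i else 0)}
         \<union> {\<sigma>\<in>S. (\<Sum>i\<in>{1..n}. if \<sigma> i \<in> L then a i else 0) \<le> c - r})"
      by (rule card_mono[OF _ sub]) (use finS in auto)
    also have "\<dots> \<le> card {\<sigma>\<in>S. c + r \<le> (\<Sum>i\<in>{1..n}. if \<sigma> i \<in> L then a i else 0)}
         + card {\<sigma>\<in>S. (\<Sum>i\<in>{1..n}. if \<sigma> i \<in> L then a i else 0) \<le> c - r}"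
      by (rule card_Un_le)
    finally have "real (card {\<sigma>\<in>S. wsum w (grp \<sigma> n l j) x \<notin> Jset n w W q l})
       \<le> real (card {\<sigma>\<in>S. c + r \<le> (\<Sum>i\<in>{1..n}. if \<sigma> i \<in> L then a i else 0)})
         + real (card {\<sigma>\<in>S. (\<Sum>i\<in>{1..n}. if \<sigma> i \<in> L then a i else 0) \<le> c - r})"
      by (simp flip: of_nat_add)
    also have "\<dots> \<le> exp (1 - eta) * real q ^ n + exp (2 - eta) * real q ^ n"
      using tb unfolding S_def by (intro add_mono) auto
    also have "\<dots> \<le> 2 * exp (2 - eta) * real q ^ n"
    proof -
      have "exp (1 - eta) \<le> exp (2 - eta)" by simp
      hence "exp (1 - eta) * real q ^ n \<le> exp (2 - eta) * real q ^ n" by (intro mult_right_mono) auto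
      thus ?thesis by (simp add: mult.commute)
    qed
    finally show ?thesis using False by (simp add: S_def eta_def M_def)
  qed
qed



theorem mainTheorem7:
  fixes n W q k :: nat and p w x :: "nat \<Rightarrow> nat"
  assumes "n \<ge> 3"
    and "wmax n w \<le> W" and "W \<le> n * wmax n w"
    and "q = 2 ^ k" and "q * wmax n w \<le> W"
    and "x \<in> binvecs n"
    and "W - wmax n w \<le> wsum w {1..n} x" and "wsum w {1..n} x \<le> W"
  shows "measure_pmf.prob (pmf_of_set ({1..n} \<rightarrow>\<^sub>E {1..q}))
           {\<sigma>. \<forall>l \<le> k. \<forall>j \<in> {1..q div 2 ^ l}.
                  wsum w (grp \<sigma> n l j) x \<in> Jset n w W q l \<and>
                  Carr n p w W q \<sigma> l j (wsum w (grp \<sigma> n l j) x)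
                    \<ge> ereal (real (wsum p (grp \<sigma> n l j) x))}
         \<ge> 1 - 1 / (real n) ^ 2"
proof -
  note n3 = assms(1) and WM = assms(2) and WnM = assms(3) and qk = assms(4) and qM = assms(5)
    and x = assms(6) and A1 = assms(7) and A2 = assms(8)
  define S where "S = ({1..n} \<rightarrow>\<^sub>E {1..q})"
  define G where "G = {\<sigma>. \<forall>l \<le> k. \<forall>j \<in> {1..q div 2 ^ l}.
                  wsum w (grp \<sigma> n l j) x \<in> Jset n w W q l \<and>
                  Carr n p w W q \<sigma> l j (wsum w (grp \<sigma> n l j) x)
                    \<ge> ereal (real (wsum p (grp \<sigma> n l j) x))}"
  define F where "F l j = {\<sigma>\<in>S. wsum w (grp \<sigma> n l j) x \<notin> Jset n w W q l}" for l j
  define B where "B = (if wmax n w = 0 then 0 else 2 * exp (2 - 11 * ln (real n)) * real q ^ n)"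
  have q1: "q \<ge> 1" using qk by simp
  have finS: "finite S" unfolding S_def by (intro finite_PiE) auto
  have Sne: "S \<noteq> {}" unfolding S_def using q1 by (simp add: PiE_eq_empty_iff)
  have cardS: "card S = q ^ n" unfolding S_def by (simp add: card_PiE)
  have B0: "0 \<le> B" by (simp add: B_def)
  have Fb: "\<And>l j. l \<le> k \<Longrightarrow> j \<in> {1..q div 2^l} \<Longrightarrow> real (card (F l j)) \<le> B"
    unfolding F_def S_def B_def by (rule group_bound[OF WM WnM qk qM x A1 A2])
  define Fs where "Fs = (\<Union>l\<in>{..k}. \<Union>j\<in>{1..q div 2^l}. F l j)"
  have sub: "S - G \<subseteq> Fs"
  proof
    fix \<sigma> assume s: "\<sigma> \<in> S - G"
    show "\<sigma> \<in> Fs"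
    proof (rule ccontr)
      assume "\<sigma> \<notin> Fs"
      hence H: "\<forall>l\<le>k. \<forall>j\<in>{1..q div 2^l}. wsum w (grp \<sigma> n l j) x \<in> Jset n w W q l"
        using s by (auto simp: Fs_def F_def)
      have "\<sigma> \<in> G" unfolding G_def
      proof (intro CollectI allI impI ballI conjI)
        fix l j assume l: "l \<le> k" and j: "j \<in> {1..q div 2 ^ l}"
        show "wsum w (grp \<sigma> n l j) x \<in> Jset n w W q l" using H l j by blast
        show "Carr n p w W q \<sigma> l j (wsum w (grp \<sigma> n l j) x) \<ge> ereal (real (wsum p (grp \<sigma> n l j) x))"
          by (rule carr_ge[OF x _ j]) (use H l in auto)
      qed
      thus False using s by blast
    qed
  qed
  have finF: "\<And>l j. finite (F l j)" unfolding F_def using finS by auto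
  have "card Fs \<le> (\<Sum>l\<in>{..k}. card (\<Union>j\<in>{1..q div 2^l}. F l j))"
    unfolding Fs_def by (rule card_UN_le) simp
  also have "\<dots> \<le> (\<Sum>l\<in>{..k}. \<Sum>j\<in>{1..q div 2^l}. card (F l j))"
    by (intro sum_mono card_UN_le) simp
  finally have "real (card Fs) \<le> (\<Sum>l\<in>{..k}. \<Sum>j\<in>{1..q div 2^l}. real (card (F l j)))"
    by (simp flip: of_nat_sum)
  also have "\<dots> \<le> (\<Sum>l\<in>{..k}. \<Sum>j\<in>{1..q div 2^l}. B)"
    by (intro sum_mono Fb) auto
  also have "\<dots> \<le> (\<Sum>l\<in>{..k}. real q * B)"
  proof (intro sum_mono)
    fix l assume "l \<in> {..k}"
    have "real (q div 2^l) \<le> real q" by simp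
    thus "(\<Sum>j\<in>{1..q div 2^l}. B) \<le> real q * B" using B0 by (simp add: mult_right_mono)
  qed
  also have "\<dots> = real (Suc k) * real q * B" by simp
  finally have cFs: "real (card Fs) \<le> real (Suc k) * real q * B" .
  have cardG: "real (card (S \<inter> G)) \<ge> real (card S) - real (card Fs)"
  proof -
    have "S \<inter> G = S - (S - G)" by blast
    hence "card (S \<inter> G) = card S - card (S - G)"
      using finS by (simp add: card_Diff_subset)
    moreover have "card (S - G) \<le> card Fs"
      by (rule card_mono[OF _ sub]) (simp add: Fs_def finF)
    moreover have "card (S - G) \<le> card S" using finS by (simp add: card_mono)
    ultimately show ?thesis by linarith
  qed
  have qn0: "0 < real q ^ n" using q1 by simp
  have prob: "measure_pmf.prob (pmf_of_set S) G = real (card (S \<inter> G)) / real (card S)"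
    by (rule measure_pmf_of_set[OF Sne finS])
  have "1 - real (Suc k) * real q * B / real q ^ n \<le> measure_pmf.prob (pmf_of_set S) G"
  proof -
    have "1 - real (Suc k) * real q * B / real q ^ n \<le> (real q ^ n - real (card Fs)) / real q ^ n"
    proof -
      have "real (card Fs) / real q ^ n \<le> real (Suc k) * real q * B / real q ^ n"
        using cFs qn0 by (intro divide_right_mono) auto
      moreover have "(real q ^ n - real (card Fs)) / real q ^ n = 1 - real (card Fs) / real q ^ n"
        using qn0 by (simp add: diff_divide_distrib)
      ultimately show ?thesis by linarith
    qed
    also have "\<dots> \<le> real (card (S \<inter> G)) / real q ^ n"
      using cardG cardS qn0 by (intro divide_right_mono) auto
    finally show ?thesis using prob cardS by simp
  qed
  moreover have "real (Suc k) * real q * B / real q ^ n \<le> 1 / real n ^ 2"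
  proof (cases "wmax n w = 0")
    case True thus ?thesis by (simp add: B_def)
  next
    case False
    have kq: "Suc k \<le> q" using qk less_exp[of k] by (simp add: Suc_le_eq)
    have qn: "q \<le> n"
    proof -
      have "q * wmax n w \<le> n * wmax n w" using qM WnM by linarith
      thus ?thesis using False by simp
    qed
    have "real (Suc k) * real q \<le> real n * real n"
      using kq qn by (intro mult_mono) auto
    hence "real (Suc k) * real q * (2 * exp (2 - 11 * ln (real n))) \<le> 1 / real n ^ 2"
      by (intro final_arith[OF n3]) auto
    moreover have "real (Suc k) * real q * B / real q ^ n = real (Suc k) * real q * (2 * exp (2 - 11 * ln (real n)))"
      using False qn0 by (simp add: B_def)
    ultimately show ?thesis by simp
  qed
  ultimately show ?thesis unfolding S_def G_def by simp
qed

end
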